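(* Let $\Gamma$ be a triangulation of a connected closed surface with a $z$-orientation such that all faces are of type I and all zigzags are homogeneous. If $\Gamma$ has exactly two vertices of type I, then $\Gamma$ is (isomorphic to) a bipyramid $BP_n$ for some $n\ge3$.
   Context: A triangulation of a connected closed surface $M$ is a $2$-cell embedding of a connected simple finite graph in $M$ with all faces triangles. A zigzag is a sequence of edges $(e_i)$ such that $e_i,e_{i+1}$ are distinct edges of a common face, the face containing $e_i,e_{i+1}$ differs from that containing $e_{i+1},e_{i+2}$, and $e_i,e_{i+2}$ have no common vertex; it is a cyclic sequence passing through each edge in a definite direction; its reversal is a zigzag. A $z$-orientation is a set of zigzags containing exactly one of $Z,Z^{-1}$ for each zigzag $Z$; each edge is passed twice in total by its zigzags and is of type I if the two passages have opposite directions, of type II otherwise. A vertex is of type I if all its edges are of type I. A face is of type I if it contains exactly two edges of type I. When all faces are of type I, a zigzag is homogeneous if it is a cyclic sequence $e_1,e_1',e_1'',\dots,e_m,e_m',e_m''$ with the $e_i$ of type II and the $e_i',e_i''$ of type I. The bipyramid $BP_n$ is the triangulation of the sphere with vertices $1,\dots,n,a,b$, edges $i(i+1)$ (mod $n$), $ai$, $bi$, and faces $\{a,i,i+1\},\{b,i,i+1\}$. *)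

theory Defs
  imports "HOL-Library.Multiset"
begin

definition tri_edges :: "'v set set \<Rightarrow> 'v set set" where
  "tri_edges F = {e. card e = 2 \<and> (\<exists>f\<in>F. e \<subseteq> f)}"

definition triangulation :: "'v set \<Rightarrow> 'v set set \<Rightarrow> bool" where
  "triangulation V F \<longleftrightarrow>
     finite V \<and> V \<noteq> {} \<and>
     (\<forall>f\<in>F. f \<subseteq> V \<and> card f = 3) \<and>
     (\<forall>v\<in>V. \<exists>f\<in>F. v \<in> f) \<and>
     \<comment> \<open>every edge lies in exactly two faces\<close>
     (\<forall>e\<in>tri_edges F. card {f\<in>F. e \<subseteq> f} = 2) \<and>
     \<comment> \<open>the link of every vertex is connected (hence a single cycle)\<close>
     (\<forall>v\<in>V. \<forall>u w. {v,u} \<in> tri_edges F \<longrightarrow> {v,w} \<in> tri_edges F \<longrightarrow>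
         (\<lambda>a b. {v,a,b} \<in> F)\<^sup>*\<^sup>* u w) \<and>
     \<comment> \<open>the surface (equivalently its graph) is connected\<close>
     (\<forall>u\<in>V. \<forall>w\<in>V. (\<lambda>a b. {a,b} \<in> tri_edges F)\<^sup>*\<^sup>* u w)"

text \<open>A zigzag is represented by the cyclic sequence of vertices x_0, x_1, ...
it runs through; its i-th edge is x_i x_{i+1}, passed in direction x_i to x_{i+1}.
A cyclic sequence is represented by a list taken up to rotation; the list is
required to be primitive (its minimal period is its length).\<close>

definition zat :: "'v list \<Rightarrow> nat \<Rightarrow> 'v" where
  "zat xs i = xs ! (i mod length xs)"

definition zigzag :: "'v set set \<Rightarrow> 'v list \<Rightarrow> bool" where
  "zigzag F xs \<longleftrightarrow> xs \<noteq> [] \<and>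
     (\<forall>k. 0 < k \<and> k < length xs \<longrightarrow> rotate k xs \<noteq> xs) \<and>
     (\<forall>i. {zat xs i, zat xs (i+1), zat xs (i+2)} \<in> F \<and>
          {zat xs (i+1), zat xs (i+2), zat xs (i+3)} \<in> F \<and>
          {zat xs i, zat xs (i+1)} \<inter> {zat xs (i+2), zat xs (i+3)} = {})"

definition cyc_eq :: "'v list \<Rightarrow> 'v list \<Rightarrow> bool" where
  "cyc_eq xs ys \<longleftrightarrow> (\<exists>k. ys = rotate k xs)"

text \<open>A z-orientation: a set of zigzags (one representative list per cyclic
sequence) containing exactly one of Z, Z^{-1} for every zigzag Z.\<close>

definition z_orientation :: "'v set set \<Rightarrow> 'v list set \<Rightarrow> bool" where
  "z_orientation F Zs \<longleftrightarrow>
     (\<forall>ys\<in>Zs. zigzag F ys) \<and>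
     (\<forall>xs. zigzag F xs \<longrightarrow>
        (\<exists>!ys. ys \<in> Zs \<and> (cyc_eq xs ys \<or> cyc_eq (rev xs) ys)))"

definition passages :: "'v list set \<Rightarrow> ('v \<times> 'v) multiset" where
  "passages Zs = (\<Sum>ys\<in>Zs. mset (map (\<lambda>i. (zat ys i, zat ys (i+1))) [0..<length ys]))"

definition edge_typeI :: "'v set set \<Rightarrow> 'v list set \<Rightarrow> 'v set \<Rightarrow> bool" where
  "edge_typeI F Zs e \<longleftrightarrow> e \<in> tri_edges F \<and>
     (\<exists>a b. e = {a,b} \<and> count (passages Zs) (a,b) = 1 \<and> count (passages Zs) (b,a) = 1)"

definition edge_typeII :: "'v set set \<Rightarrow> 'v list set \<Rightarrow> 'v set \<Rightarrow> bool" where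
  "edge_typeII F Zs e \<longleftrightarrow> e \<in> tri_edges F \<and> \<not> edge_typeI F Zs e"

definition vertex_typeI :: "'v set set \<Rightarrow> 'v list set \<Rightarrow> 'v \<Rightarrow> bool" where
  "vertex_typeI F Zs v \<longleftrightarrow> (\<forall>e\<in>tri_edges F. v \<in> e \<longrightarrow> edge_typeI F Zs e)"

definition face_typeI :: "'v set set \<Rightarrow> 'v list set \<Rightarrow> 'v set \<Rightarrow> bool" where
  "face_typeI F Zs f \<longleftrightarrow> card {e. e \<subseteq> f \<and> card e = 2 \<and> edge_typeI F Zs e} = 2"

definition homogeneous :: "'v set set \<Rightarrow> 'v list set \<Rightarrow> 'v list \<Rightarrow> bool" where
  "homogeneous F Zs ys \<longleftrightarrow> (\<exists>k. let zs = rotate k ys in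
      length zs mod 3 = 0 \<and>
      (\<forall>i<length zs.
         (i mod 3 = 0 \<longrightarrow> edge_typeII F Zs {zat zs i, zat zs (i+1)}) \<and>
         (i mod 3 \<noteq> 0 \<longrightarrow> edge_typeI F Zs {zat zs i, zat zs (i+1)})))"

text \<open>Vertices Inl i (i < n) form the cycle, Inr True = a, Inr False = b.\<close>

definition bp_V :: "nat \<Rightarrow> (nat + bool) set" where
  "bp_V n = Inl ` {..<n} \<union> {Inr True, Inr False}"

definition bp_F :: "nat \<Rightarrow> (nat + bool) set set" where
  "bp_F n = (\<Union>i<n. {{Inr True, Inl i, Inl ((i+1) mod n)},
                      {Inr False, Inl i, Inl ((i+1) mod n)}})"

end

theory Submission
  imports Defs
begin

lemma nbrs_eq:
  assumes "card {y. G x y} = 2" "G x p" "G x q" "p \<noteq> q" "G x z"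
  shows "z = p \<or> z = q"
proof -
  have fin: "finite {y. G x y}" using assms(1) card.infinite by fastforce
  have sub: "{p,q} \<subseteq> {y. G x y}" using assms(2,3) by simp
  have "card {p,q} = 2" using assms(4) by simp
  hence "{p,q} = {y. G x y}" using card_subset_eq[OF fin sub] assms(1) by simp
  thus ?thesis using assms(5) by blast
qed

lemma nbr_other:
  assumes "card {y. G x y} = 2"
  shows "\<exists>z. G x z \<and> z \<noteq> p"
proof -
  obtain a b where ab: "{y. G x y} = {a,b}" "a \<noteq> b" using assms card_2_iff by metis
  have "G x a" "G x b" using ab(1) by (metis insertI1 mem_Collect_eq, metis insertI1 insert_commute mem_Collect_eq)
  thus ?thesis using ab(2) by metis
qed

lemma cycle_enum:
  fixes G :: "'a \<Rightarrow> 'a \<Rightarrow> bool" and W :: "'a set"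
  assumes fin: "finite W" and ne: "W \<noteq> {}"
    and sym: "\<And>x y. G x y \<Longrightarrow> G y x"
    and irr: "\<And>x. \<not> G x x"
    and inW: "\<And>x y. G x y \<Longrightarrow> x \<in> W \<and> y \<in> W"
    and deg: "\<And>x. x \<in> W \<Longrightarrow> card {y. G x y} = 2"
    and conn: "\<And>x y. x \<in> W \<Longrightarrow> y \<in> W \<Longrightarrow> G\<^sup>*\<^sup>* x y"
  shows "\<exists>n\<ge>3. \<exists>g. bij_betw g {..<n} W \<and> (\<forall>x y. G x y \<longleftrightarrow> (\<exists>i<n. {x,y} = {g i, g (Suc i mod n)}))"
proof -
  obtain x0 where x0: "x0 \<in> W" using ne by blast
  obtain x1 where x1: "G x0 x1" using nbr_other[of G x0, OF deg[OF x0]] by blast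
  define nb where "nb u p = (SOME z. G u z \<and> z \<noteq> p)" for u p
  have nbp: "G u (nb u p) \<and> nb u p \<noteq> p" if "u \<in> W" for u p
    unfolding nb_def using someI_ex[OF nbr_other[of G u p, OF deg[OF that]]] .
  define st where "st = rec_nat (x0, x1) (\<lambda>_ s. (snd s, nb (snd s) (fst s)))"
  have st0: "st 0 = (x0, x1)" by (simp add: st_def)
  have stS: "st (Suc k) = (snd (st k), nb (snd (st k)) (fst (st k)))" for k by (simp add: st_def)
  define x where "x k = fst (st k)" for k
  have xS: "x (Suc k) = snd (st k)" for k by (simp add: x_def stS)
  have xSS: "x (Suc (Suc k)) = nb (x (Suc k)) (x k)" for k by (simp add: x_def stS xS)
  have P1: "G (x k) (x (Suc k))" for k
  proof (induction k)
    case 0 thus ?case using x1 by (simp add: x_def stS st0)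
  next
    case (Suc k)
    have "x (Suc k) \<in> W" using inW[OF Suc.IH] by blast
    thus ?case using nbp xSS by simp
  qed
  have xW: "x k \<in> W" for k using inW[OF P1[of k]] by blast
  have P2: "x (Suc (Suc k)) \<noteq> x k" for k using nbp[OF xW[of "Suc k"]] xSS by simp
  have "\<not> inj_on x {..card W}"
  proof
    assume "inj_on x {..card W}"
    hence "card (x ` {..card W}) = card {..card W}" by (rule card_image)
    moreover have "x ` {..card W} \<subseteq> W" using xW by auto
    hence "card (x ` {..card W}) \<le> card W" using fin card_mono by blast
    ultimately show False by simp
  qed
  hence "\<exists>j. \<exists>i<j. x i = x j" unfolding inj_on_def by (metis linorder_neqE_nat)
  define J where "J = (LEAST j. \<exists>i<j. x i = x j)"
  obtain I where IJ: "I < J" "x I = x J" using LeastI_ex[OF \<open>\<exists>j. \<exists>i<j. x i = x j\<close>] unfolding J_def by blast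
  have dist: "x i \<noteq> x j" if "i < j" "j < J" for i j
    using not_less_Least[of j "\<lambda>j. \<exists>i<j. x i = x j"] that unfolding J_def by blast
  have injJ: "inj_on x {..<J}"
    unfolding inj_on_def by (metis lessThan_iff linorder_neqE_nat dist)
  have I0: "I = 0"
  proof (rule ccontr)
    assume "I \<noteq> 0"
    then obtain i where i: "I = Suc i" by (cases I) auto
    have "J \<noteq> Suc I" using IJ P1[of I] irr by metis
    moreover have "J \<noteq> Suc (Suc I)" using IJ P2[of I] by metis
    ultimately have J3: "Suc (Suc I) < J" using IJ by linarith
    obtain m where m: "J = Suc m" using IJ by (cases J) auto
    have "G (x I) (x m)" using P1[of m] m IJ sym by metis
    moreover have "G (x I) (x i)" using P1[of i] i sym by simp
    moreover have "G (x I) (x (Suc I))" using P1[of I] .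
    moreover have "x i \<noteq> x (Suc I)" using P2[of i] i by simp
    ultimately have "x m = x i \<or> x m = x (Suc I)" using nbrs_eq[of G "x I", OF deg[OF xW[of I]]] by blast
    moreover have "x i \<noteq> x m" using dist[of i m] i m J3 by simp
    moreover have "x (Suc I) \<noteq> x m" using dist[of "Suc I" m] m J3 by simp
    ultimately show False by simp
  qed
  have xJ: "x J = x 0" using IJ I0 by simp
  have J3: "3 \<le> J"
  proof -
    have "J \<noteq> 1" using xJ P1[of 0] irr by (metis One_nat_def)
    moreover have "J \<noteq> 2" using xJ P2[of 0] by (metis numeral_2_eq_2)
    ultimately show ?thesis using IJ I0 by linarith
  qed
  obtain m where m: "J = Suc m" using IJ by (cases J) auto
  define nxt where "nxt k = x (Suc k mod J)" for k
  have nxt_eq: "nxt k = x (Suc k)" if "k < J" for k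
  proof (cases "Suc k = J")
    case True thus ?thesis using xJ by (simp add: nxt_def)
  next
    case False thus ?thesis using that by (simp add: nxt_def)
  qed
  have nbrs: "G (x k) z \<longleftrightarrow> z = x (Suc k) \<or> z = (if k = 0 then x m else x (k - 1))" if k: "k < J" for k z
  proof -
    define pr where "pr = (if k = 0 then x m else x (k - 1))"
    have gp: "G (x k) pr"
    proof (cases "k = 0")
      case True thus ?thesis using P1[of m] m xJ sym by (simp add: pr_def)
    next
      case False then obtain k' where "k = Suc k'" by (cases k) auto
      thus ?thesis using P1[of k'] sym by (simp add: pr_def)
    qed
    have neq: "x (Suc k) \<noteq> pr"
    proof (cases "k = 0")
      case True
      have "x 1 \<noteq> x m" using dist[of 1 m] m J3 by simp
      thus ?thesis using True by (simp add: pr_def)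
    next
      case False then obtain k' where "k = Suc k'" by (cases k) auto
      thus ?thesis using P2[of k'] by (simp add: pr_def)
    qed
    show ?thesis unfolding pr_def[symmetric]
    proof
      assume "G (x k) z"
      thus "z = x (Suc k) \<or> z = pr" using nbrs_eq[of G "x k", OF deg[OF xW[of k]] P1[of k] gp neq] by blast
    next
      assume "z = x (Suc k) \<or> z = pr"
      thus "G (x k) z" using P1[of k] gp by blast
    qed
  qed
  define C where "C = x ` {..<J}"
  have xSC: "x (Suc k) \<in> C" if "k < J" for k
  proof (cases "Suc k = J")
    case True thus ?thesis using xJ IJ unfolding C_def by (metis imageI lessThan_iff)
  next
    case False thus ?thesis using that unfolding C_def by simp
  qed
  have closed: "z \<in> C" if yC: "y \<in> C" and gyz: "G y z" for y z
  proof -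
    obtain k where k: "k < J" "y = x k" using yC unfolding C_def by blast
    have "z = x (Suc k) \<or> z = (if k = 0 then x m else x (k - 1))" using nbrs[OF k(1)] gyz k(2) by blast
    thus ?thesis using xSC[OF k(1)] m k(1) unfolding C_def by (auto split: if_splits)
  qed
  have WC: "W \<subseteq> C"
  proof
    fix w assume "w \<in> W"
    hence "G\<^sup>*\<^sup>* (x 0) w" using conn xW by blast
    thus "w \<in> C"
    proof (induction rule: rtranclp_induct)
      case base thus ?case using IJ unfolding C_def by auto
    next
      case (step y z) thus ?case using closed by blast
    qed
  qed
  have CW: "C \<subseteq> W" unfolding C_def using xW by auto
  have bij: "bij_betw x {..<J} W" unfolding bij_betw_def using injJ WC CW C_def by blast
  have edges: "G u v \<longleftrightarrow> (\<exists>i<J. {u,v} = {x i, x (Suc i mod J)})" for u v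
  proof
    assume g: "G u v"
    hence "u \<in> C" using inW WC by blast
    then obtain k where k: "k < J" "u = x k" unfolding C_def by blast
    have "v = x (Suc k) \<or> v = (if k = 0 then x m else x (k - 1))" using nbrs[OF k(1)] g k(2) by blast
    thus "\<exists>i<J. {u,v} = {x i, x (Suc i mod J)}"
    proof
      assume "v = x (Suc k)"
      hence "{u,v} = {x k, x (Suc k mod J)}" using k nxt_eq[OF k(1)] unfolding nxt_def by simp
      thus ?thesis using k(1) by blast
    next
      assume v: "v = (if k = 0 then x m else x (k - 1))"
      show ?thesis
      proof (cases "k = 0")
        case True
        have "Suc m mod J = 0" using m by simp
        hence "{u,v} = {x m, x (Suc m mod J)}" using True v k(2) by (simp add: insert_commute)
        thus ?thesis using m by blast
      next
        case False
        then obtain k' where kk: "k = Suc k'" by (cases k) auto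
        have "Suc k' mod J = Suc k'" using k(1) kk by simp
        hence "{u,v} = {x k', x (Suc k' mod J)}" using False v k(2) kk by (simp add: insert_commute)
        thus ?thesis using k(1) kk by (intro exI[of _ k']) simp
      qed
    qed
  next
    assume "\<exists>i<J. {u,v} = {x i, x (Suc i mod J)}"
    then obtain i where i: "i < J" "{u,v} = {x i, x (Suc i mod J)}" by blast
    have "G (x i) (x (Suc i mod J))" using P1[of i] nxt_eq[OF i(1)] unfolding nxt_def by simp
    moreover have "x i \<noteq> x (Suc i mod J)" using calculation irr by metis
    ultimately show "G u v" using i(2) sym by (auto simp: doubleton_eq_iff)
  qed
  show ?thesis using J3 bij edges by blast
qed


lemma disj4: "a \<noteq> c \<Longrightarrow> a \<noteq> d \<Longrightarrow> b \<noteq> c \<Longrightarrow> b \<noteq> d \<Longrightarrow> {a,b} \<inter> {c,d} = {}"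
  by auto

lemma card3_distinct: "card {a,b,c} = 3 \<Longrightarrow> a\<noteq>b \<and> b\<noteq>c \<and> a\<noteq>c"
  by (auto simp: card_insert_if split: if_splits)

locale tri =
  fixes V :: "'v set" and F :: "'v set set"
  assumes tri: "triangulation V F"
begin

lemma finV: "finite V" using tri by (simp add: triangulation_def)
lemma face_sub: "f \<in> F \<Longrightarrow> f \<subseteq> V \<and> card f = 3" using tri by (simp add: triangulation_def)
lemma vert_face: "v \<in> V \<Longrightarrow> \<exists>f\<in>F. v \<in> f" using tri by (simp add: triangulation_def)
lemma edge_two: "e \<in> tri_edges F \<Longrightarrow> card {f\<in>F. e \<subseteq> f} = 2" using tri by (simp add: triangulation_def)
lemma link_conn: "v \<in> V \<Longrightarrow> {v,u} \<in> tri_edges F \<Longrightarrow> {v,w} \<in> tri_edges F \<Longrightarrow> (\<lambda>a b. {v,a,b} \<in> F)\<^sup>*\<^sup>* u w"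
  using tri by (simp add: triangulation_def)

lemma face_distinct: "{a,b,c} \<in> F \<Longrightarrow> a\<noteq>b \<and> b\<noteq>c \<and> a\<noteq>c"
proof -
  assume "{a,b,c} \<in> F"
  hence "card {a,b,c} = 3" using face_sub by blast
  thus ?thesis by (rule card3_distinct)
qed

lemma face_V: "{a,b,c} \<in> F \<Longrightarrow> a \<in> V \<and> b \<in> V \<and> c \<in> V"
proof -
  assume "{a,b,c} \<in> F"
  hence "{a,b,c} \<subseteq> V" using face_sub by blast
  thus ?thesis by simp
qed

lemma face_split: "f \<in> F \<Longrightarrow> \<exists>p q r. f = {p,q,r} \<and> p\<noteq>q \<and> q\<noteq>r \<and> p\<noteq>r"
proof -
  assume "f \<in> F"
  hence "card f = 3" using face_sub by blast
  thus ?thesis by (simp only: card_3_iff)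
qed

lemma edge_of_face: "{p,q,r} \<in> F \<Longrightarrow> {p,q} \<in> tri_edges F"
proof -
  assume a: "{p,q,r} \<in> F"
  hence "p \<noteq> q" using face_distinct by blast
  hence "card {p,q} = 2" by simp
  moreover have "{p,q} \<subseteq> {p,q,r}" by blast
  ultimately show ?thesis unfolding tri_edges_def using a by blast
qed

lemma faces_on_edge:
  assumes f0: "{p,q,r} \<in> F"
  shows "\<exists>s. s \<notin> {p,q,r} \<and> {q,r,s} \<in> F \<and> (\<forall>f\<in>F. {q,r} \<subseteq> f \<longrightarrow> f = {p,q,r} \<or> f = {q,r,s})"
proof -
  have d: "p\<noteq>q" "q\<noteq>r" "p\<noteq>r" using face_distinct[OF f0] by auto
  have "{q,r,p} = {p,q,r}" by (simp add: insert_commute)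
  hence "{q,r,p} \<in> F" using f0 by simp
  hence e: "{q,r} \<in> tri_edges F" by (rule edge_of_face)
  define A where "A = {f\<in>F. {q,r} \<subseteq> f}"
  have c2: "card A = 2" using edge_two[OF e] unfolding A_def .
  have inS: "{p,q,r} \<in> A" using f0 unfolding A_def by simp
  obtain x y where xy: "A = {x,y}" "x \<noteq> y" using c2 card_2_iff by metis
  obtain g where g: "g \<in> A" "g \<noteq> {p,q,r}" and Sg: "\<forall>f\<in>A. f = {p,q,r} \<or> f = g"
  proof (cases "x = {p,q,r}")
    case True thus ?thesis using that[of y] xy by simp
  next
    case False
    hence "y = {p,q,r}" using inS xy by simp
    thus ?thesis using that[of x] xy False by simp
  qed
  have gF: "g \<in> F" and qrg: "{q,r} \<subseteq> g" using g unfolding A_def by simp_all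
  have cg: "card g = 3" using face_sub gF by simp
  have fg: "finite g" using cg card.infinite by fastforce
  have "card (g - {q,r}) = 1" using cg qrg d fg by (simp add: card_Diff_subset)
  then obtain s where s: "g - {q,r} = {s}" using card_1_singletonE by blast
  have gs: "g = {q,r,s}" using s qrg by blast
  have sn: "s \<noteq> q" "s \<noteq> r" using s by blast+
  have "s \<noteq> p"
  proof
    assume "s = p"
    hence "g = {p,q,r}" using gs by (simp add: insert_commute)
    thus False using g(2) by simp
  qed
  hence "s \<notin> {p,q,r}" using sn by simp
  moreover have "{q,r,s} \<in> F" using gF gs by simp
  moreover have "\<forall>f\<in>F. {q,r} \<subseteq> f \<longrightarrow> f = {p,q,r} \<or> f = {q,r,s}"
  proof (intro ballI impI)
    fix f assume "f \<in> F" "{q,r} \<subseteq> f"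
    hence "f \<in> A" unfolding A_def by simp
    thus "f = {p,q,r} \<or> f = {q,r,s}" using Sg gs by simp
  qed
  ultimately show ?thesis by blast
qed

lemma other_face_unique:
  assumes "{p,q,r} \<in> F" "{q,r,s} \<in> F" "{q,r,s'} \<in> F" "s \<noteq> p" "s' \<noteq> p"
  shows "s = s'"
proof -
  obtain t where t: "t \<notin> {p,q,r}" "{q,r,t} \<in> F" "\<forall>f\<in>F. {q,r} \<subseteq> f \<longrightarrow> f = {p,q,r} \<or> f = {q,r,t}"
    using faces_on_edge[OF assms(1)] by blast
  have ds: "s \<noteq> q" "s \<noteq> r" using face_distinct[OF assms(2)] by auto
  have ds': "s' \<noteq> q" "s' \<noteq> r" using face_distinct[OF assms(3)] by auto
  have sub: "{q,r} \<subseteq> {q,r,x}" for x by blast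
  have "{q,r,s} = {p,q,r} \<or> {q,r,s} = {q,r,t}" using t(3) assms(2) sub by blast
  moreover have "s \<in> {q,r,s}" by simp
  ultimately have "s \<in> {p,q,r} \<or> s \<in> {q,r,t}" by metis
  hence "s = t" using ds assms(4) by simp
  moreover have "{q,r,s'} = {p,q,r} \<or> {q,r,s'} = {q,r,t}" using t(3) assms(3) sub by blast
  moreover have "s' \<in> {q,r,s'}" by simp
  ultimately have "s' \<in> {p,q,r} \<or> s' \<in> {q,r,t}" by metis
  hence "s' = t" using ds' assms(5) by simp
  with \<open>s = t\<close> show ?thesis by simp
qed

definition nx :: "'v \<times> 'v \<times> 'v \<Rightarrow> 'v \<times> 'v \<times> 'v" where
  "nx y = (fst (snd y), snd (snd y), SOME s. s \<noteq> fst y \<and> {fst (snd y), snd (snd y), s} \<in> F)"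

definition S where "S = {y. {fst y, fst (snd y), snd (snd y)} \<in> F}"

lemma nx_prop:
  assumes "{p,q,r} \<in> F"
  shows "nx (p,q,r) = (q, r, snd (snd (nx (p,q,r)))) \<and> snd (snd (nx (p,q,r))) \<noteq> p \<and> {q,r,snd (snd (nx (p,q,r)))} \<in> F"
proof -
  obtain s where "s \<notin> {p,q,r}" "{q,r,s} \<in> F" using faces_on_edge[OF assms] by blast
  hence "\<exists>s. s \<noteq> p \<and> {q,r,s} \<in> F" by blast
  from someI_ex[OF this] show ?thesis by (simp add: nx_def)
qed

lemma nx_S: assumes "y \<in> S" shows "nx y \<in> S"
proof -
  obtain p q r where y: "y = (p,q,r)" by (cases y) auto
  have f: "{p,q,r} \<in> F" using assms y by (simp add: S_def)
  define s where "s = snd (snd (nx (p,q,r)))"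
  have e: "nx (p,q,r) = (q,r,s)" and fs: "{q,r,s} \<in> F" using nx_prop[OF f] unfolding s_def by blast+
  show ?thesis using fs by (simp add: S_def y e)
qed

lemma nx_inj: "inj_on nx S"
proof (rule inj_onI)
  fix y z assume y: "y \<in> S" and z: "z \<in> S" and e: "nx y = nx z"
  obtain p q r where yy: "y = (p,q,r)" by (cases y) auto
  obtain p' q' r' where zz: "z = (p',q',r')" by (cases z) auto
  have fy: "{p,q,r} \<in> F" using y yy by (simp add: S_def)
  have fz: "{p',q',r'} \<in> F" using z zz by (simp add: S_def)
  have qq: "q' = q" "r' = r" using e yy zz by (simp_all add: nx_def)
  let ?s = "snd (snd (nx (p,q,r)))"
  have s1: "?s \<noteq> p" "{q,r,?s} \<in> F" using nx_prop[OF fy] by auto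
  have "?s = snd (snd (nx (p',q,r)))" using e yy zz qq by simp
  hence s2: "?s \<noteq> p'" using nx_prop[of p' q r] fz qq by auto
  have f1: "{?s,q,r} \<in> F" using s1 by (simp add: insert_commute)
  have "{q,r,p} \<in> F" using fy by (simp add: insert_commute)
  moreover have "{q,r,p'} \<in> F" using fz qq by (simp add: insert_commute)
  ultimately have "p = p'" using other_face_unique[OF f1] s1 s2 by metis
  thus "y = z" using yy zz qq by simp
qed

lemma finS: "finite S"
proof -
  have "S \<subseteq> V \<times> V \<times> V" unfolding S_def using face_V by auto
  thus ?thesis using finV finite_subset by blast
qed

lemma funpow_S: "y \<in> S \<Longrightarrow> (nx ^^ i) y \<in> S"
  by (induction i) (auto simp: nx_S)

lemma period_exists:
  assumes "y \<in> S" shows "\<exists>n>0. (nx ^^ n) y = y"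
proof -
  let ?g = "\<lambda>k. (nx ^^ k) y"
  have "\<not> inj_on ?g UNIV"
  proof
    assume "inj_on ?g UNIV"
    moreover have "?g ` UNIV \<subseteq> S" using funpow_S[OF assms] by auto
    ultimately have "finite (UNIV :: nat set)" by (rule inj_on_finite[OF _ _ finS])
    thus False by simp
  qed
  hence "\<exists>i j. ?g i = ?g j \<and> i \<noteq> j" unfolding inj_on_def by auto
  then obtain i j where ij: "?g i = ?g j" "i \<noteq> j" by blast
  have canc: "(nx ^^ i) y = (nx ^^ (i + d)) y \<Longrightarrow> (nx ^^ d) y = y" for i d
  proof (induction i)
    case 0 thus ?case by simp
  next
    case (Suc i)
    have "nx ((nx ^^ i) y) = nx ((nx ^^ (i + d)) y)" using Suc.prems by simp
    hence "(nx ^^ i) y = (nx ^^ (i + d)) y"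
      by (rule inj_onD[OF nx_inj _ funpow_S[OF assms] funpow_S[OF assms]])
    thus ?case using Suc.IH by blast
  qed
  show ?thesis
  proof (cases "i < j")
    case True
    hence "(nx ^^ (j - i)) y = y" using canc[of i "j - i"] ij by simp
    thus ?thesis using True by (intro exI[of _ "j - i"]) simp
  next
    case False
    hence "j < i" using ij by simp
    hence "(nx ^^ (i - j)) y = y" using canc[of j "i - j"] ij by simp
    thus ?thesis using \<open>j < i\<close> by (intro exI[of _ "i - j"]) simp
  qed
qed

end

lemma zat_rotate: "xs \<noteq> [] \<Longrightarrow> zat (rotate k xs) i = zat xs (i + k)"
  by (simp add: zat_def nth_rotate mod_add_right_eq add.commute)

lemma zat_mod: "zat xs (i mod length xs) = zat xs i"
  by (simp add: zat_def)

lemma zat_shift: "zat xs (i + length xs) = zat xs i"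
  by (simp add: zat_def)

lemma zat_rev: "xs \<noteq> [] \<Longrightarrow> zat (rev xs) j = xs ! (length xs - Suc (j mod length xs))"
  by (simp add: zat_def rev_nth)

context tri begin

lemma zigzag_through:
  assumes f: "{p,q,r} \<in> F"
  shows "\<exists>xs. zigzag F xs \<and> zat xs 0 = p \<and> zat xs 1 = q \<and> zat xs 2 = r"
proof -
  define st where "st = (p,q,r)"
  have stS: "st \<in> S" using f by (simp add: S_def st_def)
  define x where "x i = fst ((nx ^^ i) st)" for i
  have K1: "(nx ^^ i) st \<in> S" for i using funpow_S[OF stS] .
  have K2: "(nx ^^ i) st = (x i, x (Suc i), x (Suc (Suc i)))" for i
    by (simp add: x_def nx_def prod_eq_iff)
  have K3: "{x i, x (Suc i), x (Suc (Suc i))} \<in> F" for i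
    using K1[of i] K2[of i] by (simp add: S_def)
  have K4: "x (Suc (Suc (Suc i))) \<noteq> x i" for i
  proof -
    have "nx (x i, x (Suc i), x (Suc (Suc i))) = (nx ^^ Suc i) st" using K2[of i] by simp
    also have "\<dots> = (x (Suc i), x (Suc (Suc i)), x (Suc (Suc (Suc i))))" using K2[of "Suc i"] by simp
    finally show ?thesis using nx_prop[OF K3[of i]] by simp
  qed
  define N where "N = (LEAST n. 0 < n \<and> (nx ^^ n) st = st)"
  have Nex: "\<exists>n. 0 < n \<and> (nx ^^ n) st = st" using period_exists[OF stS] by blast
  have N: "0 < N" "(nx ^^ N) st = st" using LeastI_ex[OF Nex] unfolding N_def by auto
  have Nmin: "\<And>k. 0 < k \<Longrightarrow> k < N \<Longrightarrow> (nx ^^ k) st \<noteq> st"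
    using not_less_Least unfolding N_def by blast
  have mult: "(nx ^^ (m * N)) st = st" for m
  proof (induction m)
    case 0 thus ?case by simp
  next
    case (Suc m)
    have "(nx ^^ (Suc m * N)) st = (nx ^^ N) ((nx ^^ (m * N)) st)"
      by (simp add: funpow_add add.commute)
    thus ?case using Suc N by simp
  qed
  have per: "(nx ^^ i) st = (nx ^^ (i mod N)) st" for i
  proof -
    have "i = i mod N + (i div N) * N" by simp
    hence "(nx ^^ i) st = (nx ^^ (i mod N)) ((nx ^^ ((i div N) * N)) st)"
      by (metis funpow_add o_apply)
    thus ?thesis using mult by simp
  qed
  define xs where "xs = map x [0..<N]"
  have len: "length xs = N" by (simp add: xs_def)
  have zx: "zat xs i = x i" for i
  proof -
    have "zat xs i = x (i mod N)" using N(1) by (simp add: zat_def xs_def)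
    also have "\<dots> = x i" using per[of i] by (simp add: x_def)
    finally show ?thesis .
  qed
  have prim: "\<forall>k. 0 < k \<and> k < length xs \<longrightarrow> rotate k xs \<noteq> xs"
  proof (intro allI impI)
    fix k assume k: "0 < k \<and> k < length xs"
    show "rotate k xs \<noteq> xs"
    proof
      assume rk: "rotate k xs = xs"
      have ne: "xs \<noteq> []" using N(1) len by auto
      have h: "x (i + k) = x i" for i
        using zat_rotate[OF ne, of k i] rk zx by simp
      have "x k = x 0" using h[of 0] by simp
      moreover have "x (Suc k) = x (Suc 0)" using h[of "Suc 0"] by simp
      moreover have "x (Suc (Suc k)) = x (Suc (Suc 0))" using h[of "Suc (Suc 0)"] by simp
      ultimately have "(nx ^^ k) st = (x 0, x (Suc 0), x (Suc (Suc 0)))" using K2[of k] by simp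
      also have "\<dots> = st" using K2[of 0] by simp
      finally show False using Nmin k len by auto
    qed
  qed
  have c3: "\<forall>i. {zat xs i, zat xs (i + 1), zat xs (i + 2)} \<in> F \<and>
          {zat xs (i + 1), zat xs (i + 2), zat xs (i + 3)} \<in> F \<and>
          {zat xs i, zat xs (i + 1)} \<inter> {zat xs (i + 2), zat xs (i + 3)} = {}"
  proof
    fix i
    have e: "i + 1 = Suc i" "i + 2 = Suc (Suc i)" "i + 3 = Suc (Suc (Suc i))" by simp_all
    have a: "x i \<noteq> x (Suc i)" "x (Suc i) \<noteq> x (Suc (Suc i))" "x i \<noteq> x (Suc (Suc i))"
      using face_distinct[OF K3[of i]] by blast+
    have b: "x (Suc (Suc i)) \<noteq> x (Suc (Suc (Suc i)))" "x (Suc i) \<noteq> x (Suc (Suc (Suc i)))"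
      using face_distinct[OF K3[of "Suc i"]] by blast+
    have "{x i, x (Suc i)} \<inter> {x (Suc (Suc i)), x (Suc (Suc (Suc i)))} = {}"
      by (rule disj4) (use a b K4[of i] in auto)
    thus "{zat xs i, zat xs (i + 1), zat xs (i + 2)} \<in> F \<and>
          {zat xs (i + 1), zat xs (i + 2), zat xs (i + 3)} \<in> F \<and>
          {zat xs i, zat xs (i + 1)} \<inter> {zat xs (i + 2), zat xs (i + 3)} = {}"
      unfolding e zx using K3[of i] K3[of "Suc i"] by simp
  qed
  have c1: "xs \<noteq> []" using N(1) len by auto
  have "zigzag F xs"
    unfolding zigzag_def by (intro conjI c1 prim c3)
  moreover have "zat xs 0 = p \<and> zat xs 1 = q \<and> zat xs 2 = r"
  proof -
    have two: "(2::nat) = Suc (Suc 0)" by simp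
    show ?thesis unfolding two using K2[of 0] by (simp add: zx st_def)
  qed
  ultimately show ?thesis by blast
qed


end

lemma zat_mult: "zat xs (length xs * k + t) = zat xs t"
  by (simp add: zat_def)

lemma two_subsets:
  assumes "e \<subseteq> {x,y,z}" "card e = 2"
  shows "e = {x,y} \<or> e = {x,z} \<or> e = {y,z}"
proof -
  obtain a b where ab: "e = {a,b}" "a \<noteq> b" using assms(2) card_2_iff by metis
  have "a = x \<or> a = y \<or> a = z" "b = x \<or> b = y \<or> b = z" using assms(1) ab by blast+
  thus ?thesis using ab by (elim disjE) (simp_all add: insert_commute)
qed

locale zz = tri V F for V :: "'v set" and F +
  fixes Zs :: "'v list set"
  assumes zo: "z_orientation F Zs"
    and ftI: "\<forall>f\<in>F. face_typeI F Zs f"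
    and hom: "\<forall>ys\<in>Zs. homogeneous F Zs ys"
begin

abbreviation tI where "tI e \<equiv> edge_typeI F Zs e"

lemma Zs_zig: "ys \<in> Zs \<Longrightarrow> zigzag F ys"
  using zo by (simp add: z_orientation_def)

lemma in_Zs:
  assumes f: "{p,q,r} \<in> F"
  shows "\<exists>ys\<in>Zs. \<exists>i. (zat ys i = p \<and> zat ys (Suc i) = q \<and> zat ys (Suc (Suc i)) = r) \<or>
                       (zat ys i = r \<and> zat ys (Suc i) = q \<and> zat ys (Suc (Suc i)) = p)"
proof -
  obtain xs where xs: "zigzag F xs" "zat xs 0 = p" "zat xs 1 = q" "zat xs 2 = r"
    using zigzag_through[OF f] by blast
  have dd: "p \<noteq> q" "q \<noteq> r" "p \<noteq> r" using face_distinct[OF f] by auto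
  define L where "L = length xs"
  have ne: "xs \<noteq> []" using xs(1) by (simp add: zigzag_def)
  have L3: "3 \<le> L"
  proof (rule ccontr)
    assume "\<not> 3 \<le> L"
    moreover have "0 < L" using ne L_def by simp
    ultimately have "L = 1 \<or> L = 2" by linarith
    thus False
    proof
      assume "L = 1"
      hence "zat xs 1 = zat xs 0" by (simp add: zat_def L_def)
      thus False using xs dd by simp
    next
      assume "L = 2"
      hence "zat xs 2 = zat xs 0" by (simp add: zat_def L_def)
      thus False using xs dd by simp
    qed
  qed
  have z0: "xs ! 0 = p" using xs(2) L3 by (simp add: zat_def L_def)
  have z1: "xs ! 1 = q" using xs(3) L3 by (simp add: zat_def L_def)
  have z2: "xs ! 2 = r" using xs(4) L3 by (simp add: zat_def L_def)
  obtain ys where ys: "ys \<in> Zs" "cyc_eq xs ys \<or> cyc_eq (rev xs) ys"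
    using zo xs(1) unfolding z_orientation_def by blast
  from ys(2) show ?thesis
  proof
    assume "cyc_eq xs ys"
    then obtain k where k: "ys = rotate k xs" by (auto simp: cyc_eq_def)
    define i where "i = (L - 1) * k"
    have ik: "i + k = L * k" using L3 unfolding i_def by (cases L) auto
    have "zat ys (i + t) = zat xs t" for t
    proof -
      have "zat ys (i + t) = zat xs (i + t + k)" using k zat_rotate[OF ne] by simp
      also have "i + t + k = L * k + t" using ik by simp
      finally show ?thesis using zat_mult[of xs k t] L_def by simp
    qed
    hence "zat ys i = p \<and> zat ys (Suc i) = q \<and> zat ys (Suc (Suc i)) = r"
      using xs(2,3,4) by (metis add_0_right add_Suc_right numeral_2_eq_2 One_nat_def)
    thus ?thesis using ys(1) by blast
  next
    assume "cyc_eq (rev xs) ys"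
    then obtain k where k: "ys = rotate k (rev xs)" by (auto simp: cyc_eq_def)
    have ner: "rev xs \<noteq> []" using ne by simp
    define i where "i = (L - 1) * k + (L - 3)"
    have ik: "i + k = L * k + (L - 3)" using L3 unfolding i_def by (cases L) auto
    have zr: "zat ys (i + t) = xs ! (L - Suc ((L - 3 + t) mod L))" for t
    proof -
      have "zat ys (i + t) = zat (rev xs) (i + t + k)" using k zat_rotate[OF ner] by simp
      also have "\<dots> = xs ! (L - Suc ((i + t + k) mod L))" using zat_rev[OF ne] L_def by simp
      also have "i + t + k = L * k + (L - 3 + t)" using ik by simp
      finally show ?thesis by simp
    qed
    have a0: "zat ys i = r" using zr[of 0] L3 z2 by (simp add: numeral_2_eq_2)
    have a1: "zat ys (Suc i) = q"
    proof -
      have "(L - 3 + 1) mod L = L - 2" using L3 by simp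
      thus ?thesis using zr[of 1] L3 z1 by simp
    qed
    have a2: "zat ys (Suc (Suc i)) = p"
    proof -
      have "(L - 3 + 2) mod L = L - 1" using L3 by simp
      thus ?thesis using zr[of 2] L3 z0 by (simp add: numeral_2_eq_2)
    qed
    show ?thesis using ys(1) a0 a1 a2 by blast
  qed
qed


lemma hom_pattern:
  assumes ys: "ys \<in> Zs"
  shows "\<exists>c. \<forall>m. tI {zat ys m, zat ys (Suc m)} \<longleftrightarrow> (m + c) mod 3 \<noteq> 0"
proof -
  have ne: "ys \<noteq> []" using Zs_zig[OF ys] by (simp add: zigzag_def)
  define L where "L = length ys"
  have L0: "0 < L" using ne L_def by simp
  obtain k where hk: "let zs = rotate k ys in length zs mod 3 = 0 \<and>
      (\<forall>i<length zs.
         (i mod 3 = 0 \<longrightarrow> edge_typeII F Zs {zat zs i, zat zs (i+1)}) \<and>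
         (i mod 3 \<noteq> 0 \<longrightarrow> edge_typeI F Zs {zat zs i, zat zs (i+1)}))"
    using hom ys unfolding homogeneous_def by blast
  define zs where "zs = rotate k ys"
  have lz: "length zs = L" by (simp add: zs_def L_def)
  have L3: "L mod 3 = 0" and H: "\<forall>i<L.
         (i mod 3 = 0 \<longrightarrow> edge_typeII F Zs {zat zs i, zat zs (i+1)}) \<and>
         (i mod 3 \<noteq> 0 \<longrightarrow> edge_typeI F Zs {zat zs i, zat zs (i+1)})"
    using hk unfolding Let_def zs_def[symmetric] lz by simp_all
  have nez: "zs \<noteq> []" using ne by (simp add: zs_def)
  have P: "tI {zat zs j, zat zs (Suc j)} \<longleftrightarrow> j mod 3 \<noteq> 0" for j
  proof -
    define i where "i = j mod L"
    have iL: "i < L" using L0 by (simp add: i_def)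
    have e1: "zat zs i = zat zs j" using zat_mod[of zs j] lz by (simp add: i_def)
    have e2: "zat zs (i + 1) = zat zs (Suc j)"
    proof -
      have "(i + 1) mod L = (Suc j) mod L" unfolding i_def by (simp add: mod_Suc_eq)
      thus ?thesis by (metis zat_mod lz)
    qed
    have e3: "i mod 3 = j mod 3" unfolding i_def using L3 by (simp add: mod_mod_cancel dvd_eq_mod_eq_0)
    show ?thesis using H[rule_format, OF iL] e1 e2 e3 by (auto simp: edge_typeII_def)
  qed
  have "tI {zat ys m, zat ys (Suc m)} \<longleftrightarrow> (m + (L - 1) * k) mod 3 \<noteq> 0" for m
  proof -
    define j where "j = m + (L - 1) * k"
    have jk: "j + k = L * k + m" using L0 unfolding j_def by (cases L) auto
    have "zat zs j = zat ys m"
      using zat_rotate[OF ne, of k j] jk zat_mult[of ys k m] by (simp add: zs_def L_def)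
    moreover have "zat zs (Suc j) = zat ys (Suc m)"
      using zat_rotate[OF ne, of k "Suc j"] jk zat_mult[of ys k "Suc m"] by (simp add: zs_def L_def)
    ultimately show ?thesis using P[of j] unfolding j_def by simp
  qed
  thus ?thesis by blast
qed

lemma hom_fwd:
  assumes "ys \<in> Zs" "tI {zat ys i, zat ys (Suc i)}" "tI {zat ys (Suc i), zat ys (Suc (Suc i))}"
  shows "\<not> tI {zat ys (Suc (Suc i)), zat ys (Suc (Suc (Suc i)))}"
proof -
  obtain c where c: "\<forall>m. tI {zat ys m, zat ys (Suc m)} \<longleftrightarrow> (m + c) mod 3 \<noteq> 0"
    using hom_pattern[OF assms(1)] by blast
  have "(i + c) mod 3 \<noteq> 0" "(Suc i + c) mod 3 \<noteq> 0" using c assms(2,3) by blast+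
  hence "(Suc (Suc i) + c) mod 3 = 0" by presburger
  thus ?thesis using c[rule_format, of "Suc (Suc i)"] by simp
qed

lemma hom_bwd:
  assumes "ys \<in> Zs" "tI {zat ys (Suc i), zat ys (Suc (Suc i))}" "tI {zat ys (Suc (Suc i)), zat ys (Suc (Suc (Suc i)))}"
  shows "\<not> tI {zat ys i, zat ys (Suc i)}"
proof -
  obtain c where c: "\<forall>m. tI {zat ys m, zat ys (Suc m)} \<longleftrightarrow> (m + c) mod 3 \<noteq> 0"
    using hom_pattern[OF assms(1)] by blast
  have "(Suc i + c) mod 3 \<noteq> 0" "(Suc (Suc i) + c) mod 3 \<noteq> 0" using c assms(2,3) by blast+
  hence "(i + c) mod 3 = 0" by presburger
  thus ?thesis using c[rule_format, of i] by simp
qed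

lemma face_rule:
  assumes f: "{x,y,z} \<in> F" and n: "\<not> tI {y,z}"
  shows "tI {x,y} \<and> tI {x,z}"
proof -
  define D where "D = {e. e \<subseteq> {x,y,z} \<and> card e = 2 \<and> tI e}"
  have cD: "card D = 2" using ftI[rule_format, OF f] unfolding face_typeI_def D_def .
  have dd: "x \<noteq> y" "y \<noteq> z" "x \<noteq> z" using face_distinct[OF f] by auto
  have sub: "D \<subseteq> {{x,y},{x,z}}"
  proof
    fix e assume "e \<in> D"
    hence e: "e \<subseteq> {x,y,z}" "card e = 2" "tI e" unfolding D_def by simp_all
    have "e = {x,y} \<or> e = {x,z} \<or> e = {y,z}" using two_subsets[OF e(1) e(2)] .
    thus "e \<in> {{x,y},{x,z}}" using e(3) n by (elim disjE) simp_all
  qed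
  have ne: "{x,y} \<noteq> {x,z}" using dd by (simp add: doubleton_eq_iff)
  have "card {{x,y},{x,z}} = 2" using ne by simp
  hence "D = {{x,y},{x,z}}" using card_subset_eq[OF _ sub] cD by simp
  hence "{x,y} \<in> D" "{x,z} \<in> D" by simp_all
  thus ?thesis unfolding D_def by simp
qed

lemma face_nonI:
  assumes f: "{x,y,z} \<in> F"
  shows "\<not> (tI {x,y} \<and> tI {y,z} \<and> tI {x,z})"
proof
  assume a: "tI {x,y} \<and> tI {y,z} \<and> tI {x,z}"
  define D where "D = {e. e \<subseteq> {x,y,z} \<and> card e = 2 \<and> tI e}"
  have cD: "card D = 2" using ftI[rule_format, OF f] unfolding face_typeI_def D_def .
  have dd: "x \<noteq> y" "y \<noteq> z" "x \<noteq> z" using face_distinct[OF f] by auto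
  have m: "{x,y} \<in> D" "{y,z} \<in> D" "{x,z} \<in> D" using a dd unfolding D_def by simp_all
  have sub: "{{x,y},{y,z},{x,z}} \<subseteq> D" using m by simp
  have fin: "finite D"
  proof (rule finite_subset)
    show "D \<subseteq> Pow {x,y,z}" unfolding D_def by blast
  qed simp
  have n1: "{x,y} \<noteq> {y,z}" "{x,y} \<noteq> {x,z}" "{y,z} \<noteq> {x,z}" using dd by (simp_all add: doubleton_eq_iff)
  have "card {{x,y},{y,z},{x,z}} = 3" using n1 by simp
  moreover have "card {{x,y},{y,z},{x,z}} \<le> card D" by (rule card_mono[OF fin sub])
  ultimately show False using cD by simp
qed

lemma zig_at:
  assumes "ys \<in> Zs"
  shows "{zat ys j, zat ys (Suc j), zat ys (Suc (Suc j))} \<in> F \<and>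
         {zat ys (Suc j), zat ys (Suc (Suc j)), zat ys (Suc (Suc (Suc j)))} \<in> F \<and>
         {zat ys j, zat ys (Suc j)} \<inter> {zat ys (Suc (Suc j)), zat ys (Suc (Suc (Suc j)))} = {}"
proof -
  have e: "j + 1 = Suc j" "j + 2 = Suc (Suc j)" "j + 3 = Suc (Suc (Suc j))" by simp_all
  have "zigzag F ys" using Zs_zig[OF assms] .
  hence "{zat ys j, zat ys (j+1), zat ys (j+2)} \<in> F \<and>
          {zat ys (j+1), zat ys (j+2), zat ys (j+3)} \<in> F \<and>
          {zat ys j, zat ys (j+1)} \<inter> {zat ys (j+2), zat ys (j+3)} = {}"
    unfolding zigzag_def by blast
  thus ?thesis unfolding e .
qed

lemma spoke:
  assumes f1: "{u,a,b} \<in> F" and ia: "tI {u,a}" and ib: "tI {u,b}"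
    and f2: "{u,b,c} \<in> F" and ca: "c \<noteq> a"
  shows "tI {u,c}"
proof -
  have c1: "{a,u,b} = {u,a,b}" by (simp add: insert_commute)
  have f1': "{a,u,b} \<in> F" using f1 c1 by simp
  have oth: "s = c" if "{u,b,s} \<in> F" "s \<noteq> a" for s
    using other_face_unique[OF f1' that(1) f2 that(2) ca] .
  have sym1: "{a,u} = {u,a}" "{b,u} = {u,b}" by (simp_all add: insert_commute)
  obtain ys i where ys: "ys \<in> Zs" and cs:
     "(zat ys i = a \<and> zat ys (Suc i) = u \<and> zat ys (Suc (Suc i)) = b) \<or>
      (zat ys i = b \<and> zat ys (Suc i) = u \<and> zat ys (Suc (Suc i)) = a)"
    using in_Zs[OF f1'] by blast
  have nbc: "\<not> tI {b,c}"
    using cs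
  proof
    assume h: "zat ys i = a \<and> zat ys (Suc i) = u \<and> zat ys (Suc (Suc i)) = b"
    define s where "s = zat ys (Suc (Suc (Suc i)))"
    have "\<not> tI {zat ys (Suc (Suc i)), zat ys (Suc (Suc (Suc i)))}"
      by (rule hom_fwd[OF ys]) (use h ia ib sym1 in simp_all)
    hence n: "\<not> tI {b, s}" using h s_def by simp
    have z: "{u,b,s} \<in> F" "{a,u} \<inter> {b,s} = {}" using zig_at[OF ys, of i] h s_def by simp_all
    have "s \<noteq> a" using z(2) by blast
    hence "s = c" using oth z(1) by blast
    thus ?thesis using n by simp
  next
    assume h: "zat ys i = b \<and> zat ys (Suc i) = u \<and> zat ys (Suc (Suc i)) = a"
    define L where "L = length ys"
    have L0: "0 < L" using Zs_zig[OF ys] by (simp add: zigzag_def L_def)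
    define j where "j = i + L - 1"
    have jj: "Suc j = i + L" using L0 by (simp add: j_def)
    have h2: "zat ys (Suc j) = b" "zat ys (Suc (Suc j)) = u" "zat ys (Suc (Suc (Suc j))) = a"
      using h zat_shift[of ys i] zat_shift[of ys "Suc i"] zat_shift[of ys "Suc (Suc i)"]
      by (simp_all add: jj L_def)
    define s where "s = zat ys j"
    have "\<not> tI {zat ys j, zat ys (Suc j)}"
      by (rule hom_bwd[OF ys]) (use h2 ia ib sym1 in simp_all)
    hence n: "\<not> tI {s, b}" using h2 s_def by simp
    have z: "{s,b,u} \<in> F" "{s,b} \<inter> {u,a} = {}" using zig_at[OF ys, of j] h2 s_def by simp_all
    have "s \<noteq> a" using z(2) by blast
    moreover have "{u,b,s} \<in> F" using z(1) by (simp add: insert_commute)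
    ultimately have "s = c" using oth by blast
    moreover have "{s,b} = {b,s}" by (simp add: insert_commute)
    ultimately show ?thesis using n by simp
  qed
  show ?thesis using face_rule[OF f2 nbc] by simp
qed

lemma typeI_vertex:
  assumes f: "{u,a,b} \<in> F" and ia: "tI {u,a}" and ib: "tI {u,b}"
  shows "vertex_typeI F Zs u"
proof -
  have uV: "u \<in> V" using face_V[OF f] by simp
  define Q where "Q x \<longleftrightarrow> tI {u,x} \<and> (\<forall>y. {u,x,y} \<in> F \<longrightarrow> tI {u,y})" for x
  have stepQ: "Q y" if "Q x" "{u,x,y} \<in> F" for x y
  proof -
    have ix: "tI {u,x}" and iy: "tI {u,y}" using that unfolding Q_def by blast+
    have "tI {u,z}" if "{u,y,z} \<in> F" for z
    proof (cases "z = x")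
      case True thus ?thesis using ix by simp
    next
      case False thus ?thesis using spoke[OF \<open>{u,x,y} \<in> F\<close> ix iy that] by blast
    qed
    thus ?thesis unfolding Q_def using iy by blast
  qed
  have fa: "{u,b,a} \<in> F" using f by (simp add: insert_commute)
  have Qa: "Q a"
  proof -
    have "tI {u,y}" if "{u,a,y} \<in> F" for y
    proof (cases "y = b")
      case True thus ?thesis using ib by simp
    next
      case False thus ?thesis using spoke[OF fa ib ia that] by blast
    qed
    thus ?thesis unfolding Q_def using ia by blast
  qed
  have reach: "Q w" if "(\<lambda>x y. {u,x,y} \<in> F)\<^sup>*\<^sup>* a w" for w
    using that
  proof (induction rule: rtranclp_induct)
    case base thus ?case by (rule Qa)
  next
    case (step y z) thus ?case using stepQ by blast
  qed
  have ea: "{u,a} \<in> tri_edges F" using edge_of_face[OF f] .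
  show ?thesis unfolding vertex_typeI_def
  proof (intro ballI impI)
    fix e assume e: "e \<in> tri_edges F" "u \<in> e"
    have "card e = 2" using e(1) unfolding tri_edges_def by simp
    then obtain p q where pq: "e = {p,q}" "p \<noteq> q" using card_2_iff by metis
    obtain w where w: "e = {u,w}"
    proof (cases "u = p")
      case True thus ?thesis using that[of q] pq by simp
    next
      case False hence "u = q" using e(2) pq by simp
      thus ?thesis using that[of p] pq by (simp add: insert_commute)
    qed
    have "(\<lambda>x y. {u,x,y} \<in> F)\<^sup>*\<^sup>* a w" using link_conn[OF uV ea] e(1) w by simp
    hence "Q w" by (rule reach)
    thus "tI e" using w unfolding Q_def by simp
  qed
qed

abbreviation vT where "vT v \<equiv> vertex_typeI F Zs v"

lemma apex:
  assumes f: "{x,y,z} \<in> F" and n: "\<not> tI {y,z}"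
  shows "vT x \<and> \<not> vT y \<and> \<not> vT z"
proof -
  have i: "tI {x,y}" "tI {x,z}" using face_rule[OF f n] by blast+
  have vx: "vT x" using typeI_vertex[OF f i] .
  have "{y,z,x} \<in> F" using f by (simp add: insert_commute)
  hence e: "{y,z} \<in> tri_edges F" by (rule edge_of_face)
  have "\<not> vT y" using e n unfolding vertex_typeI_def by blast
  moreover have "\<not> vT z" using e n unfolding vertex_typeI_def by blast
  ultimately show ?thesis using vx by blast
qed

lemma face_T:
  assumes f: "f \<in> F"
  shows "\<exists>t p q. f = {t,p,q} \<and> vT t \<and> \<not> vT p \<and> \<not> vT q"
proof -
  obtain x y z where xyz: "f = {x,y,z}" using face_split[OF f] by blast
  have fx: "{x,y,z} \<in> F" using f xyz by simp
  have "\<not> tI {x,y} \<or> \<not> tI {y,z} \<or> \<not> tI {x,z}" using face_nonI[OF fx] by blast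
  thus ?thesis
  proof (elim disjE)
    assume n: "\<not> tI {x,y}"
    have e: "{z,x,y} = {x,y,z}" by (simp add: insert_commute)
    have "{z,x,y} \<in> F" using fx e by simp
    from apex[OF this n] show ?thesis using xyz e by metis
  next
    assume n: "\<not> tI {y,z}"
    from apex[OF fx n] show ?thesis using xyz by metis
  next
    assume n: "\<not> tI {x,z}"
    have e: "{y,x,z} = {x,y,z}" by (simp add: insert_commute)
    have "{y,x,z} \<in> F" using fx e by simp
    from apex[OF this n] show ?thesis using xyz e by metis
  qed
qed

lemma T_unique:
  assumes f: "{t,x,y} \<in> F" and vt: "vT t"
  shows "\<not> vT x \<and> \<not> vT y"
proof -
  obtain t' p q where e: "{t,x,y} = {t',p,q}" and h: "vT t'" "\<not> vT p" "\<not> vT q"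
    using face_T[OF f] by blast
  have d: "t \<noteq> x" "t \<noteq> y" using face_distinct[OF f] by auto
  have "t \<in> {t,x,y}" by simp
  hence "t \<in> {t',p,q}" using e by simp
  hence tt: "t = t'" using vt h by auto
  have "x \<in> {t,x,y}" by simp
  hence "x \<in> {t',p,q}" using e by simp
  hence "x = t' \<or> x = p \<or> x = q" by simp
  hence nx: "\<not> vT x" using tt d h by auto
  have "y \<in> {t,x,y}" by simp
  hence "y \<in> {t',p,q}" using e by simp
  hence "y = t' \<or> y = p \<or> y = q" by simp
  hence "\<not> vT y" using tt d h by auto
  thus ?thesis using nx by simp
qed

lemma T_in_face:
  assumes f: "{x,y,s} \<in> F" and nx: "\<not> vT x" and ny: "\<not> vT y"
  shows "vT s"
proof -
  obtain t p q where e: "{x,y,s} = {t,p,q}" and h: "vT t" "\<not> vT p" "\<not> vT q"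
    using face_T[OF f] by blast
  have "t \<in> {t,p,q}" by simp
  hence "t \<in> {x,y,s}" using e by simp
  hence "t = x \<or> t = y \<or> t = s" by simp
  thus ?thesis using h nx ny by auto
qed

lemma face_with_edge:
  assumes f: "f \<in> F" and "u \<in> f" "y \<in> f" "u \<noteq> y"
  shows "\<exists>s. f = {u,y,s}"
proof -
  have cg: "card f = 3" using face_sub f by simp
  have fg: "finite f" using cg card.infinite by fastforce
  have sub: "{u,y} \<subseteq> f" using assms by simp
  have "card (f - {u,y}) = 1" using cg sub assms(4) fg by (simp add: card_Diff_subset)
  then obtain s where s: "f - {u,y} = {s}" using card_1_singletonE by blast
  have "f = {u,y} \<union> (f - {u,y})" using sub by blast
  hence "f = {u,y} \<union> {s}" using s by simp
  thus ?thesis by auto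
qed

end

locale zz2 = zz V F Zs for V :: "'v set" and F Zs +
  assumes cT: "card {v\<in>V. vertex_typeI F Zs v} = 2"
begin

definition G where "G a b \<longleftrightarrow> a \<in> V \<and> b \<in> V \<and> \<not> vT a \<and> \<not> vT b \<and> {a,b} \<in> tri_edges F"

definition W where "W = {v\<in>V. \<not> vT v}"

lemma AB: "\<exists>A B. A \<noteq> B \<and> A \<in> V \<and> B \<in> V \<and> (\<forall>v\<in>V. vT v \<longleftrightarrow> v = A \<or> v = B)"
proof -
  obtain A B where ab: "{v\<in>V. vT v} = {A,B}" "A \<noteq> B" using cT card_2_iff by metis
  have "A \<in> {v\<in>V. vT v}" "B \<in> {v\<in>V. vT v}" using ab(1) by simp_all
  hence "A \<in> V" "B \<in> V" by simp_all
  moreover have "\<forall>v\<in>V. vT v \<longleftrightarrow> v = A \<or> v = B"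
  proof
    fix v assume "v \<in> V"
    hence "vT v \<longleftrightarrow> v \<in> {v\<in>V. vT v}" by simp
    thus "vT v \<longleftrightarrow> v = A \<or> v = B" using ab(1) by simp
  qed
  ultimately show ?thesis using ab(2) by blast
qed

end

locale zz3 = zz2 V F Zs for V :: "'v set" and F Zs +
  fixes A B :: 'v
  assumes AB: "A \<noteq> B" "A \<in> V" "B \<in> V" "\<forall>v\<in>V. vT v \<longleftrightarrow> v = A \<or> v = B"
begin

lemma vTA: "vT A" and vTB: "vT B" using AB by auto

lemma F3:
  assumes f: "{t,x,y} \<in> F" and vt: "vT t"
  shows "{A,x,y} \<in> F \<and> {B,x,y} \<in> F"
proof -
  have nxy: "\<not> vT x" "\<not> vT y" using T_unique[OF f vt] by auto
  obtain s where s: "s \<notin> {t,x,y}" "{x,y,s} \<in> F" using faces_on_edge[OF f] by blast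
  have vs: "vT s" using T_in_face[OF s(2) nxy] .
  have tV: "t \<in> V" and sV: "s \<in> V" using face_V[OF f] face_V[OF s(2)] by auto
  have t2: "t = A \<or> t = B" using AB(4) tV vt by blast
  have s2: "s = A \<or> s = B" using AB(4) sV vs by blast
  have ts: "s \<noteq> t" using s(1) by simp
  have f': "{s,x,y} \<in> F" using s(2) by (simp add: insert_commute)
  show ?thesis
  proof (cases "t = A")
    case True
    hence "s = B" using s2 ts by blast
    thus ?thesis using True f f' by simp
  next
    case False
    hence "t = B" "s = A" using t2 s2 ts by blast+
    thus ?thesis using f f' by simp
  qed
qed

lemma has_A:
  assumes uV: "u \<in> V" and nu: "\<not> vT u"
  shows "\<exists>y0. {A,u,y0} \<in> F"
proof -
  obtain f where f: "f \<in> F" "u \<in> f" using vert_face[OF uV] by blast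
  obtain t p q where e: "f = {t,p,q}" and h: "vT t" "\<not> vT p" "\<not> vT q" using face_T[OF f(1)] by blast
  have "u \<in> {t,p,q}" using f(2) e by simp
  hence "u = p \<or> u = q" using nu h(1) by auto
  hence "\<exists>y0. {t,u,y0} \<in> F"
  proof
    assume "u = p" thus ?thesis using f(1) e by blast
  next
    assume "u = q"
    hence "{t,u,p} \<in> F" using f(1) e by (simp add: insert_commute)
    thus ?thesis by blast
  qed
  then obtain y0 where "{t,u,y0} \<in> F" by blast
  from F3[OF this h(1)] show ?thesis by blast
qed

lemma G_sym: "G x y \<Longrightarrow> G y x"
  unfolding G_def by (simp add: insert_commute)

lemma G_irr: "\<not> G x x"
  unfolding G_def tri_edges_def by simp

lemma G_W: "G x y \<Longrightarrow> x \<in> W \<and> y \<in> W"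
  unfolding G_def W_def by simp

lemma G_face: "{t,x,y} \<in> F \<Longrightarrow> vT t \<Longrightarrow> G x y"
proof -
  assume f: "{t,x,y} \<in> F" and vt: "vT t"
  have "\<not> vT x" "\<not> vT y" using T_unique[OF f vt] by auto
  moreover have "x \<in> V" "y \<in> V" using face_V[OF f] by auto
  moreover have "{x,y,t} \<in> F" using f by (simp add: insert_commute)
  hence "{x,y} \<in> tri_edges F" by (rule edge_of_face)
  ultimately show "G x y" unfolding G_def by simp
qed

lemma G_faces:
  assumes g: "G x y"
  shows "{A,x,y} \<in> F \<and> {B,x,y} \<in> F"
proof -
  have e: "{x,y} \<in> tri_edges F" and nx: "\<not> vT x" and ny: "\<not> vT y" using g unfolding G_def by auto
  obtain f where f: "f \<in> F" "{x,y} \<subseteq> f" using e unfolding tri_edges_def by blast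
  have "x \<noteq> y" using G_irr g by metis
  then obtain s where fs: "f = {x,y,s}" using face_with_edge[OF f(1)] f(2) by blast
  have f': "{x,y,s} \<in> F" using f(1) fs by simp
  have vs: "vT s" using T_in_face[OF f' nx ny] .
  have "{s,x,y} \<in> F" using f' by (simp add: insert_commute)
  from F3[OF this vs] show ?thesis .
qed

lemma deg:
  assumes u: "u \<in> W"
  shows "card {y. G u y} = 2"
proof -
  have uV: "u \<in> V" and nu: "\<not> vT u" using u unfolding W_def by auto
  obtain y0 where f0: "{A,u,y0} \<in> F" using has_A[OF uV nu] by blast
  have f0': "{y0,A,u} \<in> F" using f0 by (simp add: insert_commute)
  obtain y1 where y1: "y1 \<notin> {y0,A,u}" "{A,u,y1} \<in> F"
      "\<forall>f\<in>F. {A,u} \<subseteq> f \<longrightarrow> f = {y0,A,u} \<or> f = {A,u,y1}"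
    using faces_on_edge[OF f0'] by blast
  have g0: "G u y0" using G_face[OF f0 vTA] .
  have g1: "G u y1" using G_face[OF y1(2) vTA] .
  have "{y. G u y} = {y0,y1}"
  proof
    show "{y0,y1} \<subseteq> {y. G u y}" using g0 g1 by simp
  next
    show "{y. G u y} \<subseteq> {y0,y1}"
    proof
      fix y assume "y \<in> {y. G u y}"
      hence gy: "G u y" by simp
      have fy: "{A,u,y} \<in> F" using G_faces[OF gy] by blast
      have ny: "\<not> vT y" using gy unfolding G_def by simp
      have "y \<noteq> A" using ny vTA by blast
      moreover have "y \<noteq> u" using gy G_irr by metis
      moreover have "{A,u} \<subseteq> {A,u,y}" by blast
      hence "{A,u,y} = {y0,A,u} \<or> {A,u,y} = {A,u,y1}" using y1(3)[rule_format, OF fy] by simp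
      moreover have "y \<in> {A,u,y}" by simp
      ultimately have "y \<in> {y0,A,u} \<or> y \<in> {A,u,y1}" by metis
      thus "y \<in> {y0,y1}" using \<open>y \<noteq> A\<close> \<open>y \<noteq> u\<close> by auto
    qed
  qed
  moreover have "y0 \<noteq> y1" using y1(1) by auto
  ultimately show ?thesis by simp
qed

lemma conn:
  assumes x: "x \<in> W" and w: "w \<in> W"
  shows "G\<^sup>*\<^sup>* x w"
proof -
  have "\<exists>y0. {A,v,y0} \<in> F" if "v \<in> W" for v
    using has_A that unfolding W_def by blast
  then obtain y0 y1 where "{A,x,y0} \<in> F" "{A,w,y1} \<in> F" using x w by blast
  hence ex: "{A,x} \<in> tri_edges F" and ew: "{A,w} \<in> tri_edges F" using edge_of_face by blast+
  have "(\<lambda>a b. {A,a,b} \<in> F)\<^sup>*\<^sup>* x w" using link_conn[OF AB(2) ex ew] .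
  thus ?thesis
  proof (induction rule: rtranclp_induct)
    case base thus ?case by simp
  next
    case (step y z)
    have "G y z" using G_face[OF step(2) vTA] .
    thus ?case using step(3) by (simp add: rtranclp.rtrancl_into_rtrancl)
  qed
qed

lemma W_fin: "finite W" unfolding W_def using finV by simp

lemma W_ne: "W \<noteq> {}"
proof -
  obtain f where f: "f \<in> F" "A \<in> f" using vert_face AB(2) by blast
  obtain t p q where e: "f = {t,p,q}" and h: "vT t" "\<not> vT p" "\<not> vT q" using face_T[OF f(1)] by blast
  have "{t,p,q} \<in> F" using f e by simp
  hence "p \<in> V" using face_V by blast
  hence "p \<in> W" using h unfolding W_def by simp
  thus ?thesis by blast
qed

lemma final: "\<exists>n\<ge>3. \<exists>\<phi>. bij_betw \<phi> V (bp_V n) \<and> (\<lambda>f. \<phi> ` f) ` F = bp_F n"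
proof -
  obtain n g where n3: "3 \<le> n" and bij: "bij_betw g {..<n} W"
    and ed: "\<forall>x y. G x y \<longleftrightarrow> (\<exists>i<n. {x,y} = {g i, g (Suc i mod n)})"
    using cycle_enum[of W G, OF W_fin W_ne G_sym G_irr G_W deg conn] by blast
  define h where "h = the_inv_into {..<n} g"
  have inj: "inj_on g {..<n}" using bij by (simp add: bij_betw_def)
  have gW: "g i \<in> W" if "i < n" for i using bij that by (auto simp: bij_betw_def)
  have hg: "h (g i) = i" if "i < n" for i
    unfolding h_def using the_inv_into_f_f[OF inj] that by simp
  have hW: "h w < n" if "w \<in> W" for w
    using bij_betw_the_inv_into[OF bij] that unfolding h_def bij_betw_def by auto
  have ghW: "g (h w) = w" if "w \<in> W" for w
    unfolding h_def using f_the_inv_into_f_bij_betw[OF bij] that by simp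
  have Wc: "v \<in> W \<longleftrightarrow> v \<in> V \<and> v \<noteq> A \<and> v \<noteq> B" for v
    unfolding W_def using AB(4) by blast
  define \<phi> where "\<phi> v = (if v = A then Inr True else if v = B then Inr False else Inl (h v))" for v
  define \<psi> where "\<psi> z = (case z of Inl i \<Rightarrow> g i | Inr b \<Rightarrow> (if b then A else B))" for z
  have \<phi>A: "\<phi> A = Inr True" by (simp add: \<phi>_def)
  have \<phi>B: "\<phi> B = Inr False" using AB(1) by (simp add: \<phi>_def)
  have \<phi>g: "\<phi> (g i) = Inl i" if "i < n" for i
    using gW[OF that] Wc hg[OF that] by (simp add: \<phi>_def)
  have b1: "bij_betw \<phi> V (bp_V n)"
  proof (rule bij_betw_byWitness[where f'=\<psi>])
    show "\<forall>a\<in>V. \<psi> (\<phi> a) = a"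
    proof
      fix a assume a: "a \<in> V"
      show "\<psi> (\<phi> a) = a"
      proof (cases "a = A \<or> a = B")
        case True thus ?thesis using AB(1) by (auto simp: \<phi>_def \<psi>_def)
      next
        case False
        hence "a \<in> W" using Wc a by blast
        thus ?thesis using False ghW by (simp add: \<phi>_def \<psi>_def)
      qed
    qed
    show "\<forall>a'\<in>bp_V n. \<phi> (\<psi> a') = a'"
    proof
      fix z assume z: "z \<in> bp_V n"
      show "\<phi> (\<psi> z) = z"
      proof (cases z)
        case (Inl i)
        hence "i < n" using z by (auto simp: bp_V_def)
        thus ?thesis using Inl \<phi>g by (simp add: \<psi>_def)
      next
        case (Inr b) thus ?thesis using \<phi>A \<phi>B by (cases b) (simp_all add: \<psi>_def)
      qed
    qed
    show "\<phi> ` V \<subseteq> bp_V n"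
    proof
      fix z assume "z \<in> \<phi> ` V"
      then obtain a where a: "a \<in> V" "z = \<phi> a" by blast
      show "z \<in> bp_V n"
      proof (cases "a = A \<or> a = B")
        case True thus ?thesis using a AB(1) by (auto simp: \<phi>_def bp_V_def)
      next
        case False
        hence "a \<in> W" using Wc a by blast
        hence "h a < n" by (rule hW)
        thus ?thesis using a False by (simp add: \<phi>_def bp_V_def)
      qed
    qed
    show "\<psi> ` bp_V n \<subseteq> V"
    proof
      fix a assume "a \<in> \<psi> ` bp_V n"
      then obtain z where z: "z \<in> bp_V n" "a = \<psi> z" by blast
      show "a \<in> V"
      proof (cases z)
        case (Inl i)
        hence "i < n" using z by (auto simp: bp_V_def)
        thus ?thesis using Inl z gW Wc by (simp add: \<psi>_def)
      next
        case (Inr b) thus ?thesis using z AB by (cases b) (simp_all add: \<psi>_def)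
      qed
    qed
  qed
  have jn: "Suc i mod n < n" for i using n3 by simp
  have Fchar: "f \<in> F \<longleftrightarrow> (\<exists>i<n. f = {A, g i, g (Suc i mod n)} \<or> f = {B, g i, g (Suc i mod n)})" for f
  proof
    assume f: "f \<in> F"
    obtain t p q where e: "f = {t,p,q}" and hh: "vT t" using face_T[OF f] by blast
    have ft: "{t,p,q} \<in> F" using f e by simp
    have "t \<in> V" using face_V[OF ft] by simp
    hence t2: "t = A \<or> t = B" using AB(4) hh by blast
    have "G p q" using G_face[OF ft hh] .
    then obtain i where i: "i < n" "{p,q} = {g i, g (Suc i mod n)}" using ed by blast
    have "f = insert t {p,q}" using e by simp
    hence "f = insert t {g i, g (Suc i mod n)}" using i(2) by simp
    thus "\<exists>i<n. f = {A, g i, g (Suc i mod n)} \<or> f = {B, g i, g (Suc i mod n)}" using t2 i(1) by blast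
  next
    assume "\<exists>i<n. f = {A, g i, g (Suc i mod n)} \<or> f = {B, g i, g (Suc i mod n)}"
    then obtain i where i: "i < n" "f = {A, g i, g (Suc i mod n)} \<or> f = {B, g i, g (Suc i mod n)}" by blast
    have "G (g i) (g (Suc i mod n))" using ed i(1) by blast
    from G_faces[OF this] show "f \<in> F" using i(2) by blast
  qed
  have imA: "\<phi> ` {A, g i, g (Suc i mod n)} = {Inr True, Inl i, Inl ((i + 1) mod n)}" if "i < n" for i
    using \<phi>A \<phi>g[OF that] \<phi>g[OF jn[of i]] by simp
  have imB: "\<phi> ` {B, g i, g (Suc i mod n)} = {Inr False, Inl i, Inl ((i + 1) mod n)}" if "i < n" for i
    using \<phi>B \<phi>g[OF that] \<phi>g[OF jn[of i]] by simp
  have b2: "(\<lambda>f. \<phi> ` f) ` F = bp_F n"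
  proof
    show "(\<lambda>f. \<phi> ` f) ` F \<subseteq> bp_F n"
    proof
      fix X assume "X \<in> (\<lambda>f. \<phi> ` f) ` F"
      then obtain f where f: "f \<in> F" "X = \<phi> ` f" by blast
      obtain i where i: "i < n" "f = {A, g i, g (Suc i mod n)} \<or> f = {B, g i, g (Suc i mod n)}"
        using Fchar f(1) by blast
      have "X = {Inr True, Inl i, Inl ((i + 1) mod n)} \<or> X = {Inr False, Inl i, Inl ((i + 1) mod n)}"
        using i f(2) imA[OF i(1)] imB[OF i(1)] by blast
      thus "X \<in> bp_F n" unfolding bp_F_def using i(1) by blast
    qed
  next
    show "bp_F n \<subseteq> (\<lambda>f. \<phi> ` f) ` F"
    proof
      fix X assume "X \<in> bp_F n"
      then obtain i where i: "i < n" "X = {Inr True, Inl i, Inl ((i + 1) mod n)} \<or> X = {Inr False, Inl i, Inl ((i + 1) mod n)}"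
        unfolding bp_F_def by blast
      have fa: "{A, g i, g (Suc i mod n)} \<in> F" and fb: "{B, g i, g (Suc i mod n)} \<in> F"
        using Fchar i(1) by blast+
      show "X \<in> (\<lambda>f. \<phi> ` f) ` F"
        using i(2)
      proof
        assume "X = {Inr True, Inl i, Inl ((i + 1) mod n)}"
        hence "X = \<phi> ` {A, g i, g (Suc i mod n)}" using imA[OF i(1)] by simp
        thus ?thesis using fa by blast
      next
        assume "X = {Inr False, Inl i, Inl ((i + 1) mod n)}"
        hence "X = \<phi> ` {B, g i, g (Suc i mod n)}" using imB[OF i(1)] by simp
        thus ?thesis using fb by blast
      qed
    qed
  qed
  show ?thesis using n3 b1 b2 by blast
qed

end

theorem mainTheorem12:
  fixes V :: "'v set" and F :: "'v set set" and Zs :: "'v list set"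
  assumes "triangulation V F"
    and "z_orientation F Zs"
    and "\<forall>f\<in>F. face_typeI F Zs f"
    and "\<forall>ys\<in>Zs. homogeneous F Zs ys"
    and "card {v\<in>V. vertex_typeI F Zs v} = 2"
  shows "\<exists>n\<ge>3. \<exists>\<phi>. bij_betw \<phi> V (bp_V n) \<and> (\<lambda>f. \<phi> ` f) ` F = bp_F n"
proof -
  interpret z2: zz2 V F Zs
    by unfold_locales (use assms in \<open>auto simp: tri_def\<close>)
  obtain A B where "A \<noteq> B" "A \<in> V" "B \<in> V" "\<forall>v\<in>V. vertex_typeI F Zs v \<longleftrightarrow> v = A \<or> v = B"
    using z2.AB by blast
  then interpret z3: zz3 V F Zs A B by unfold_locales auto
  show ?thesis by (rule z3.final)
qed

end
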